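(* Let $\alpha_1,\alpha_2>0$ satisfy $2(\alpha_1-\alpha_2)\ge \pi e$. Let $p$ be analytic in $\mathbb{D}$ with $p(0)=1$. If $$1+\alpha_1 zp'(z)+\alpha_2 z^2p''(z)\prec 1+\sinh^{-1} z,$$ then $p(z)\prec e^z$.
   Context: $\mathbb{D}$ is the open unit disk. For $g,h$ analytic in $\mathbb{D}$, $g\prec h$ means there is an analytic $w:\mathbb{D}\to\mathbb{D}$ with $w(0)=0$ and $g=h\circ w$. $\sinh^{-1}z$ denotes the branch of the inverse hyperbolic sine analytic in $\mathbb{D}$ with $\sinh^{-1}0=0$. *)

theory Defs
  imports "HOL-Complex_Analysis.Complex_Analysis"
begin

definition subordinate :: "(complex \<Rightarrow> complex) \<Rightarrow> (complex \<Rightarrow> complex) \<Rightarrow> bool" where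
  "subordinate g h \<longleftrightarrow>
     (\<exists>w. w holomorphic_on ball 0 1 \<and> w ` ball 0 1 \<subseteq> ball 0 1 \<and> w 0 = 0 \<and>
          (\<forall>z\<in>ball 0 1. g z = h (w z)))"

end

theory Submission
  imports Defs
begin

lemma e_gt_27: "exp 1 > (27/10::real)"
  using e_approx_32 by (simp add: abs_if split: if_split_asm)

lemma arsinh_bound:
  fixes w :: complex assumes w: "norm w < 1"
  shows "norm (arsinh w) < sqrt (1 + (pi/2)^2)"
proof -
  define s where "s = csqrt (w^2 + 1)"
  have ar: "arsinh w = Ln (w + s)"
    by (simp add: arsinh_def s_def csqrt_conv_powr)
  have s2: "s^2 = w^2 + 1" by (simp add: s_def)
  have a0: "Re s \<ge> 0" using csqrt_principal[of "w^2+1"] unfolding s_def by auto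
  have re2: "Re s ^2 - Im s ^2 = 1 + Re w ^2 - Im w ^2"
    using arg_cong[OF s2, of Re] by (simp add: power2_eq_square)
  have nw: "norm w ^2 < 1" using w by (simp add: abs_square_less_1)
  have nw2: "Re w ^2 + Im w ^2 < 1"
    using nw by (simp add: cmod_power2)
  have ax: "Re s > \<bar>Re w\<bar>"
  proof (rule ccontr)
    assume "\<not> ?thesis"
    then have "Re s ^2 \<le> Re w ^2" using a0
      by (metis abs_ge_zero abs_of_nonneg not_less power2_abs power_mono)
    then have "Im s ^2 < 0" using re2 nw2 by (smt (verit) zero_le_power2)
    then show False by (smt (verit) zero_le_power2)
  qed
  define u where "u = w + s"
  define v where "v = s - w"
  have uv: "u * v = 1" using s2 unfolding u_def v_def by (simp add: algebra_simps power2_eq_square)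
  have reu: "Re u > 0" using ax unfolding u_def by auto
  have ns2: "norm s ^2 < 2"
  proof -
    have "norm s ^2 = norm (w^2+1)" using s2 by (metis norm_power)
    also have "\<dots> \<le> norm w ^2 + 1" by (metis norm_one norm_power norm_triangle_ineq)
    finally show ?thesis using nw by linarith
  qed
  have ns: "norm s < 3/2"
  proof (rule ccontr)
    assume "\<not> ?thesis"
    then have "3/2 * (3/2) \<le> norm s * norm s" by (intro mult_mono) auto
    then show False using ns2 by (simp add: power2_eq_square)
  qed
  have nu: "norm u < 5/2" unfolding u_def using norm_triangle_ineq[of w s] w ns by linarith
  have nv: "norm v < 5/2" unfolding v_def using norm_triangle_ineq4[of s w] w ns by linarith
  have nuv: "norm u * norm v = 1" using uv by (metis norm_mult norm_one)
  have nu2: "norm u > 2/5"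
  proof (rule ccontr)
    assume "\<not> ?thesis"
    then have "norm u * norm v \<le> 2/5 * norm v"
      by (intro mult_right_mono) auto
    then show False using nuv nv by linarith
  qed
  have u0: "u \<noteq> 0" using reu by auto
  have e: "exp 1 > (27/10::real)" by (rule e_gt_27)
  have lnu1: "ln (norm u) < 1"
  proof -
    have "norm u < exp 1" using nu e by linarith
    then show ?thesis using u0 by (metis exp_less_cancel_iff exp_ln zero_less_norm_iff)
  qed
  have lnu2: "ln (norm u) > -1"
  proof -
    have "exp (-1::real) = 1 / exp 1" by (simp add: exp_minus field_simps)
    also have "\<dots> < 2/5" using e by (simp add: field_simps)
    finally have "exp (-1) < norm u" using nu2 by linarith
    then show ?thesis using u0 by (metis exp_less_cancel_iff exp_ln zero_less_norm_iff)
  qed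
  have im: "\<bar>Im (Ln u)\<bar> < pi/2" using reu by (rule Re_Ln_pos_lt_imp)
  have "Re (Ln u) ^2 < 1" using lnu1 lnu2 u0
    by (simp add: abs_square_less_1)
  moreover have "Im (Ln u) ^2 < (pi/2)^2" using im
    by (metis abs_ge_zero power2_abs power_strict_mono zero_less_numeral pos2)
  ultimately have "Re (Ln u) ^2 + Im (Ln u) ^2 < 1 + (pi/2)^2" by linarith
  then show ?thesis unfolding ar u_def[symmetric] cmod_def
    by (intro real_sqrt_less_mono)
qed


theorem theorem4p9:
  fixes \<alpha>1 \<alpha>2 :: real and p :: "complex \<Rightarrow> complex"
  assumes "\<alpha>1 > 0" and "\<alpha>2 > 0" and "2 * (\<alpha>1 - \<alpha>2) \<ge> pi * exp 1"
    and "p holomorphic_on ball 0 1" and "p 0 = 1"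
    and "subordinate
           (\<lambda>z. 1 + complex_of_real \<alpha>1 * z * deriv p z
                  + complex_of_real \<alpha>2 * z\<^sup>2 * deriv (deriv p) z)
           (\<lambda>z. 1 + arsinh z)"
  shows "subordinate p exp"
proof -
  obtain w where wh: "w holomorphic_on ball 0 1" and wim: "w ` ball 0 1 \<subseteq> ball 0 1"
    and weq: "\<forall>z\<in>ball 0 1. 1 + complex_of_real \<alpha>1 * z * deriv p z
                  + complex_of_real \<alpha>2 * z\<^sup>2 * deriv (deriv p) z = 1 + arsinh (w z)"
    using assms(6) unfolding subordinate_def by blast
  define M where "M = sqrt (1 + (pi/2)^2)"
  define r where "r = deriv p"
  have rhol: "r holomorphic_on ball 0 1" using holomorphic_deriv assms(4) unfolding r_def by auto
  have pder: "\<And>z T. z \<in> ball 0 1 \<Longrightarrow> (p has_field_derivative r z) (at z within T)"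
    unfolding r_def using assms(4) by (intro holomorphic_derivI) auto
  have rder: "\<And>z T. z \<in> ball 0 1 \<Longrightarrow> (r has_field_derivative deriv r z) (at z within T)"
    using rhol by (intro holomorphic_derivI) auto
  have phib: "\<And>z. z \<in> ball 0 1 \<Longrightarrow>
      norm (z * (complex_of_real \<alpha>2 * z * deriv r z + complex_of_real \<alpha>1 * r z)) < M"
  proof -
    fix z :: complex assume z: "z \<in> ball 0 1"
    have "z * (complex_of_real \<alpha>2 * z * deriv r z + complex_of_real \<alpha>1 * r z) = arsinh (w z)"
      using weq z unfolding r_def by (auto simp: algebra_simps power2_eq_square)
    moreover have "norm (w z) < 1" using wim z by (auto simp: image_subset_iff)
    ultimately show "norm (z * (complex_of_real \<alpha>2 * z * deriv r z + complex_of_real \<alpha>1 * r z)) < M"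
      unfolding M_def using arsinh_bound by simp
  qed
  have C: "\<And>\<rho> \<zeta>. 0 < \<rho> \<Longrightarrow> \<rho> < 1 \<Longrightarrow> \<zeta> \<in> cball 0 \<rho> \<Longrightarrow> \<rho> * (\<alpha>1 * norm (r \<zeta>)) \<le> M"
  proof -
    fix \<rho> :: real and \<zeta> :: complex
    assume \<rho>0: "0 < \<rho>" and \<rho>1: "\<rho> < 1" and \<zeta>: "\<zeta> \<in> cball 0 \<rho>"
    have cb: "cball 0 \<rho> \<subseteq> ball (0::complex) 1" using \<rho>1 by auto
    have contr: "continuous_on (cball 0 \<rho>) r"
      using holomorphic_on_imp_continuous_on[OF holomorphic_on_subset[OF rhol cb]] .
    have "sphere (0::complex) \<rho> \<noteq> {}" using \<rho>0 by simp
    moreover have "continuous_on (sphere 0 \<rho>) (\<lambda>z. norm (r z))"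
      using contr by (intro continuous_intros) (auto intro: continuous_on_subset)
    ultimately obtain \<zeta>0 where z0s: "\<zeta>0 \<in> sphere 0 \<rho>"
      and z0m: "\<forall>z\<in>sphere 0 \<rho>. norm (r z) \<le> norm (r \<zeta>0)"
      using continuous_attains_sup[of "sphere 0 \<rho>" "\<lambda>z. norm (r z)"] by auto
    have mm: "\<And>z. z \<in> cball 0 \<rho> \<Longrightarrow> norm (r z) \<le> norm (r \<zeta>0)"
    proof -
      fix z :: complex assume zc: "z \<in> cball 0 \<rho>"
      show "norm (r z) \<le> norm (r \<zeta>0)"
      proof (rule maximum_modulus_frontier[of r "cball 0 \<rho>"])
        show "r holomorphic_on interior (cball 0 \<rho>)"
          using holomorphic_on_subset[OF rhol, of "ball 0 \<rho>"] \<rho>1 by (simp add: subset_ball)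
        show "continuous_on (closure (cball 0 \<rho>)) r" using contr by simp
        show "bounded (cball (0::complex) \<rho>)" by simp
        show "\<And>z. z \<in> frontier (cball 0 \<rho>) \<Longrightarrow> norm (r z) \<le> norm (r \<zeta>0)"
          using z0m \<rho>0 by (simp add: frontier_cball)
        show "z \<in> cball 0 \<rho>" by (rule zc)
      qed
    qed
    define R0 where "R0 = r \<zeta>0"
    define D where "D = deriv r \<zeta>0"
    have nR: "Re (cnj R0 * R0) = norm R0 * norm R0"
    proof -
      have "norm R0 * norm R0 = Re R0 * Re R0 + Im R0 * Im R0"
        using cmod_power2[of R0] by (simp add: power2_eq_square)
      then show ?thesis by simp
    qed
    have z0b: "\<zeta>0 \<in> ball 0 1" using z0s \<rho>1 by auto
    have nz0: "norm \<zeta>0 = \<rho>" using z0s by simp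
    have key: "Re (cnj R0 * (D * \<zeta>0)) \<ge> 0"
    proof (rule ccontr)
      assume neg: "\<not> Re (cnj R0 * (D * \<zeta>0)) \<ge> 0"
      define F where "F = (\<lambda>t::real. Re (cnj R0 * r (of_real t * \<zeta>0)))"
      have "((\<lambda>z. cnj R0 * r (z * \<zeta>0)) has_field_derivative cnj R0 * (D * \<zeta>0)) (at (of_real 1))"
      proof -
        have g: "((\<lambda>z. z * \<zeta>0) has_field_derivative \<zeta>0) (at 1)"
          by (auto intro!: derivative_eq_intros)
        have "(r has_field_derivative D) (at ((\<lambda>z. z * \<zeta>0) 1))"
          using rder[OF z0b] by (simp add: D_def)
        from DERIV_chain2[OF this g]
        have "((\<lambda>z. r (z * \<zeta>0)) has_field_derivative D * \<zeta>0) (at 1)" by simp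
        then show ?thesis by (auto intro!: derivative_eq_intros)
      qed
      then have "((\<lambda>t. cnj R0 * r (of_real t * \<zeta>0)) has_vector_derivative cnj R0 * (D * \<zeta>0)) (at 1)"
        using has_vector_derivative_real_field by fastforce
      then have "(F has_field_derivative Re (cnj R0 * (D * \<zeta>0))) (at 1)"
        unfolding F_def by (rule has_field_derivative_Re)
      then obtain d where d: "d > 0" "\<forall>h>0. h < d \<longrightarrow> F 1 < F (1 - h)"
        using DERIV_neg_dec_left neg by (metis not_le)
      define h where "h = min (d/2) (1/2)"
      have h: "h > 0" "h < d" "h \<le> 1/2" using d unfolding h_def by auto
      have "F 1 < F (1 - h)" using d h by auto
      moreover have "F (1 - h) \<le> norm R0 * norm R0"
      proof -
        have "F (1 - h) \<le> norm (cnj R0 * r (of_real (1-h) * \<zeta>0))"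
          unfolding F_def by (rule complex_Re_le_cmod)
        also have "\<dots> = norm R0 * norm (r (of_real (1-h) * \<zeta>0))" by (simp add: norm_mult)
        also have "\<dots> \<le> norm R0 * norm R0"
        proof (rule mult_left_mono)
          have "norm (complex_of_real (1-h) * \<zeta>0) = \<bar>1-h\<bar> * \<rho>" using nz0
            by (simp only: norm_mult norm_of_real)
          also have "\<dots> \<le> \<rho>" using h \<rho>0 by simp
          finally have "norm (complex_of_real (1-h) * \<zeta>0) \<le> \<rho>" .
          then show "norm (r (of_real (1-h) * \<zeta>0)) \<le> norm R0" unfolding R0_def
            by (intro mm) auto
        qed simp
        finally show ?thesis .
      qed
      moreover have "F 1 = norm R0 * norm R0"
        using nR unfolding F_def R0_def by simp
      ultimately show False by linarith
    qed
    define Q where "Q = complex_of_real \<alpha>2 * \<zeta>0 * D + complex_of_real \<alpha>1 * R0"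
    have "cnj R0 * Q = complex_of_real \<alpha>2 * (cnj R0 * (D * \<zeta>0)) + complex_of_real \<alpha>1 * (cnj R0 * R0)"
      unfolding Q_def by (simp add: algebra_simps)
    then have "Re (cnj R0 * Q) = \<alpha>2 * Re (cnj R0 * (D * \<zeta>0)) + \<alpha>1 * (norm R0 * norm R0)"
      using nR by simp
    then have "\<alpha>1 * (norm R0 * norm R0) \<le> Re (cnj R0 * Q)"
      using key assms(2) by (simp add: mult_nonneg_nonneg)
    also have "\<dots> \<le> norm R0 * norm Q"
      using complex_Re_le_cmod[of "cnj R0 * Q"] by (simp add: norm_mult)
    finally have A: "\<alpha>1 * (norm R0 * norm R0) \<le> norm R0 * norm Q" .
    have B: "\<alpha>1 * norm R0 \<le> norm Q"
    proof (cases "norm R0 = 0")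
      case True then show ?thesis by simp
    next
      case False
      then have "norm R0 > 0" by simp
      then show ?thesis using A
        by (metis mult.left_commute mult_le_cancel_left_pos)
    qed
    have "\<rho> * norm Q < M" using phib[OF z0b] nz0 unfolding Q_def D_def R0_def
      by (simp add: norm_mult)
    moreover have "\<rho> * (\<alpha>1 * norm (r \<zeta>)) \<le> \<rho> * norm Q"
    proof (rule mult_left_mono)
      have "norm (r \<zeta>) \<le> norm R0" using mm[OF \<zeta>] unfolding R0_def .
      then show "\<alpha>1 * norm (r \<zeta>) \<le> norm Q" using B assms(1)
        by (meson mult_left_mono less_imp_le order_trans)
    qed (use \<rho>0 in simp)
    ultimately show "\<rho> * (\<alpha>1 * norm (r \<zeta>)) \<le> M" by linarith
  qed
  have rb: "\<And>\<zeta>. \<zeta> \<in> ball 0 1 \<Longrightarrow> norm (r \<zeta>) \<le> M / \<alpha>1"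
  proof -
    fix \<zeta> :: complex assume \<zeta>: "\<zeta> \<in> ball 0 1"
    have "\<alpha>1 * norm (r \<zeta>) \<le> M"
    proof (rule field_le_mult_one_interval)
      fix z :: real assume z: "0 < z" "z < 1"
      define \<rho> where "\<rho> = max z ((1 + norm \<zeta>) / 2)"
      have "\<rho> > 0" "\<rho> < 1" "\<zeta> \<in> cball 0 \<rho>" "z \<le> \<rho>" using z \<zeta> unfolding \<rho>_def by (auto simp: max_def)
      then have "\<rho> * (\<alpha>1 * norm (r \<zeta>)) \<le> M" using C by blast
      moreover have "z * (\<alpha>1 * norm (r \<zeta>)) \<le> \<rho> * (\<alpha>1 * norm (r \<zeta>))"
        using \<open>z \<le> \<rho>\<close> assms(1) by (intro mult_right_mono) auto
      ultimately show "z * (\<alpha>1 * norm (r \<zeta>)) \<le> M" by linarith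
    qed
    then show "norm (r \<zeta>) \<le> M / \<alpha>1" using assms(1) by (simp add: field_simps)
  qed
  have Mlt: "M / \<alpha>1 < 1/2"
  proof -
    have pe0: "pi * exp 1 / 2 \<le> \<alpha>1 - \<alpha>2" using assms(3) by (simp add: field_simps)
    have pe: "\<alpha>1 > pi * exp 1 / 2" using assms(2) pe0 by linarith
    have e: "exp 1 > (27/10::real)" by (rule e_gt_27)
    have "pi * exp 1 / 2 > pi * (27/10) / 2" using e pi_gt3 by simp
    then have a: "\<alpha>1 / 2 > pi * (27/40)" using pe by linarith
    have a0: "0 \<le> pi * (27/40)" by simp
    have "(pi * (27/40))^2 < (\<alpha>1 / 2)^2"
      using a a0 by (intro power_strict_mono) auto
    moreover have "3 * 3 \<le> pi * pi" using pi_gt3 by (intro mult_mono) auto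
    moreover have "(pi * (27/40))^2 = (pi * pi) * (729/1600)" by (simp add: power2_eq_square)
    moreover have "(pi/2)^2 = (pi * pi) / 4" by (simp add: power2_eq_square)
    ultimately have "1 + (pi/2)^2 < (\<alpha>1 / 2)^2" by linarith
    then have "M < sqrt ((\<alpha>1 / 2)^2)" unfolding M_def by (intro real_sqrt_less_mono)
    then have "M < \<alpha>1 / 2" using assms(1) by simp
    then show ?thesis using assms(1) by (simp add: field_simps)
  qed
  have pb: "\<And>z. z \<in> ball 0 1 \<Longrightarrow> norm (p z - 1) < 1/2"
  proof -
    fix z :: complex assume z: "z \<in> ball 0 1"
    have "norm (p z - p 0) \<le> (M / \<alpha>1) * norm (z - 0)"
      by (rule field_differentiable_bound[of "ball 0 1" p r]) (use pder rb z in auto)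
    also have "\<dots> \<le> M / \<alpha>1" using z assms(1) unfolding M_def
      by (intro mult_left_le) auto
    finally have "norm (p z - 1) \<le> M / \<alpha>1" using assms(5) by simp
    then show "norm (p z - 1) < 1/2" using Mlt by linarith
  qed
  have rep: "\<And>z. z \<in> ball 0 1 \<Longrightarrow> Re (p z) > 0"
  proof -
    fix z :: complex assume "z \<in> ball 0 1"
    then have "norm (p z - 1) < 1/2" by (rule pb)
    moreover have "\<bar>Re (p z - 1)\<bar> \<le> norm (p z - 1)" by (rule abs_Re_le_cmod)
    ultimately show "Re (p z) > 0" by simp
  qed
  show ?thesis unfolding subordinate_def
  proof (intro exI[of _ "\<lambda>z. Ln (p z)"] conjI ballI subsetI)
    show "(\<lambda>z. Ln (p z)) holomorphic_on ball 0 1"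
      using rep assms(4) by (intro holomorphic_on_Ln') (force simp: complex_nonpos_Reals_iff)+
    show "Ln (p 0) = 0" using assms(5) by simp
  next
    fix y assume "y \<in> (\<lambda>z. Ln (p z)) ` ball 0 1"
    then obtain z where z: "z \<in> ball 0 1" "y = Ln (p z)" by auto
    have "norm (Ln (1 + (p z - 1))) \<le> 2 * norm (p z - 1)"
      using pb[OF z(1)] by (intro norm_Ln_le)
    then have "norm y < 1" using pb[OF z(1)] z(2) by simp
    then show "y \<in> ball 0 1" by simp
  next
    fix z :: complex assume z: "z \<in> ball 0 1"
    have "p z \<noteq> 0" using rep[OF z] by auto
    then show "p z = exp (Ln (p z))" by simp
  qed
qed

end
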